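(* Let $\{\mathcal Z_n\}$ be a Galton–Watson process with countably many types and irreducible mean progeny matrix $M$, and assume that the dichotomy property holds. If there exist $\lambda\le1$ and a vector $\boldsymbol x=(x_1,x_2,\dots)$ with $x_i>0$ for all $i$, $\sum_i x_i<\infty$ and $\boldsymbol xM\le\lambda\boldsymbol x$ componentwise, then $\boldsymbol q=\boldsymbol 1$.
   Context: A (multitype) Galton–Watson process with type set $\mathcal S=\{1,2,3,\dots\}$ is $\{\mathcal Z_n=(Z_{n1},Z_{n2},\dots)\}_{n\in\mathbb N}$, $Z_{n\ell}$ the number of type-$\ell$ individuals in generation $n$, started from one individual of type $\varphi_0$; $|\mathcal Z_n|=\sum_\ell Z_{n\ell}$. The mean progeny matrix is $M_{ij}=\partial P_i/\partial s_j|_{\boldsymbol s=\boldsymbol 1}$ (assumed finite), $P_i$ being the progeny generating function of type $i$. Global extinction: $q_i=\mathbb P[\lim_n|\mathcal Z_n|=0\mid\varphi_0=i]$. The dichotomy property holds if for every initial type $i$, with probability 1 either $|\mathcal Z_n|=0$ eventually or $|\mathcal Z_n|\to\infty$. *)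

theory Defs
  imports "HOL-Probability.Probability" "HOL-Library.Multiset"
begin

text \<open>Offspring of an individual = the multiset of the types of its children.
  Types are indexed by nat (type k here corresponds to type k+1 of the paper).\<close>

instance multiset :: (countable) countable
proof (rule countable_classI[of "\<lambda>M. to_nat (SOME xs. mset xs = M)"])
  fix M N :: "'a multiset"
  assume "to_nat (SOME xs. mset xs = M) = to_nat (SOME xs. mset xs = N)"
  then have "(SOME xs. mset xs = M) = (SOME xs. mset xs = N)" by simp
  moreover have "mset (SOME xs. mset xs = M) = M" by (rule someI_ex) (rule ex_mset)
  moreover have "mset (SOME xs. mset xs = N) = N" by (rule someI_ex) (rule ex_mset)
  ultimately show "M = N" by metis
qed

definition gw_step :: "(nat \<Rightarrow> nat multiset pmf) \<Rightarrow> nat multiset \<Rightarrow> nat multiset pmf" where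
  "gw_step p Z = foldr (\<lambda>i acc. bind_pmf (p i) (\<lambda>c. map_pmf (\<lambda>r. c + r) acc))
                    (sorted_list_of_multiset Z) (return_pmf {#})"

definition gw_law :: "(nat \<Rightarrow> nat multiset pmf) \<Rightarrow> nat \<Rightarrow> (nat \<Rightarrow> nat multiset) measure \<Rightarrow> bool" where
  "gw_law p i0 P \<longleftrightarrow> prob_space P \<and>
     sets P = sets (PiM UNIV (\<lambda>_. count_space UNIV)) \<and>
     (\<forall>n h. emeasure P {\<omega> \<in> space P. \<forall>k\<le>n. \<omega> k = h k}
        = ennreal ((if h 0 = {#i0#} then 1 else 0) * (\<Prod>k<n. pmf (gw_step p (h k)) (h (Suc k)))))"

definition mean_matrix :: "(nat \<Rightarrow> nat multiset pmf) \<Rightarrow> nat \<Rightarrow> nat \<Rightarrow> real" where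
  "mean_matrix p i j = measure_pmf.expectation (p i) (\<lambda>c. real (count c j))"

definition finite_means :: "(nat \<Rightarrow> nat multiset pmf) \<Rightarrow> bool" where
  "finite_means p \<longleftrightarrow> (\<forall>i j. integrable (measure_pmf (p i)) (\<lambda>c. real (count c j)))"

text \<open>Irreducible nonnegative matrix: for all i j some (M^n)_{ij} > 0 with n \<ge> 1,
  i.e. there is a path of positive entries from i to j.\<close>
definition irreducible_matrix :: "(nat \<Rightarrow> nat \<Rightarrow> real) \<Rightarrow> bool" where
  "irreducible_matrix M \<longleftrightarrow> (\<forall>i j. (i, j) \<in> {(a, b). M a b > 0}\<^sup>+)"

definition extinct_event :: "(nat \<Rightarrow> nat multiset) set" where
  "extinct_event = {\<omega>. \<exists>n. \<omega> n = {#}}"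

definition dichotomy :: "(nat \<Rightarrow> (nat \<Rightarrow> nat multiset) measure) \<Rightarrow> bool" where
  "dichotomy P \<longleftrightarrow> (\<forall>i. AE \<omega> in P i. (\<exists>n. \<omega> n = {#}) \<or>
        filterlim (\<lambda>n. size (\<omega> n)) at_top sequentially)"

end

theory Submission
  imports Defs
begin


lemma sum_list_count:
  fixes g :: "nat \<Rightarrow> ennreal"
  shows "sum_list (map g xs) = (\<Sum>k. of_nat (count (mset xs) k) * g k)"
proof (induction xs)
  case Nil then show ?case by simp
next
  case (Cons a xs)
  have "(\<Sum>k. of_nat (count (mset (a#xs)) k) * g k)
      = (\<Sum>k. (if k = a then g k else 0) + of_nat (count (mset xs) k) * g k)"
    by (intro suminf_cong) (auto simp: distrib_right)
  also have "\<dots> = (\<Sum>k. (if k = a then g k else 0)) + (\<Sum>k. of_nat (count (mset xs) k) * g k)"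
    by (rule suminf_add[symmetric]) auto
  also have "(\<Sum>k. (if k = a then g k else 0)) = g a"
    using sums_single[of a g] sums_unique by metis
  finally show ?case using Cons by simp
qed

lemma size_count_sum:
  "(of_nat (size z) :: ennreal) = (\<Sum>k. of_nat (count z k))"
proof -
  have "sum_list (map (\<lambda>_. 1::ennreal) (sorted_list_of_multiset z)) = (\<Sum>k. of_nat (count z k) * 1)"
    using sum_list_count[of "\<lambda>_. 1" "sorted_list_of_multiset z"] by simp
  moreover have "sum_list (map (\<lambda>_. 1::ennreal) (sorted_list_of_multiset z)) = of_nat (size z)"
    by (simp add: sum_list_triv size_mset[symmetric] del: size_mset)
  ultimately show ?thesis by simp
qed

definition Mm :: "(nat \<Rightarrow> nat multiset pmf) \<Rightarrow> nat \<Rightarrow> nat \<Rightarrow> ennreal" where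
  "Mm p a j = (\<integral>\<^sup>+ c. of_nat (count c j) \<partial>measure_pmf (p a))"

lemma foldr_mean:
  "(\<integral>\<^sup>+ w. of_nat (count w j) \<partial>measure_pmf (foldr (\<lambda>i acc. bind_pmf (p i) (\<lambda>c. map_pmf (\<lambda>r. c + r) acc)) xs (return_pmf {#})))
   = sum_list (map (\<lambda>a. Mm p a j) xs)"
proof (induction xs)
  case Nil then show ?case by simp
next
  case (Cons a xs)
  let ?acc = "foldr (\<lambda>i acc. bind_pmf (p i) (\<lambda>c. map_pmf (\<lambda>r. c + r) acc)) xs (return_pmf {#})"
  have "(\<integral>\<^sup>+ w. of_nat (count w j) \<partial>measure_pmf (foldr (\<lambda>i acc. bind_pmf (p i) (\<lambda>c. map_pmf (\<lambda>r. c + r) acc)) (a#xs) (return_pmf {#})))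
     = (\<integral>\<^sup>+ c. (\<integral>\<^sup>+ r. of_nat (count c j) + of_nat (count r j) \<partial>measure_pmf ?acc) \<partial>measure_pmf (p a))"
    by simp
  also have "\<dots> = (\<integral>\<^sup>+ c. of_nat (count c j) + (\<integral>\<^sup>+ r. of_nat (count r j) \<partial>measure_pmf ?acc) \<partial>measure_pmf (p a))"
    by (subst nn_integral_add) (auto simp: measure_pmf.emeasure_space_1)
  also have "\<dots> = Mm p a j + (\<integral>\<^sup>+ r. of_nat (count r j) \<partial>measure_pmf ?acc)"
    by (subst nn_integral_add) (auto simp: measure_pmf.emeasure_space_1 Mm_def)
  finally show ?case using Cons by simp
qed

lemma step_mean:
  "(\<integral>\<^sup>+ w. of_nat (count w j) \<partial>measure_pmf (gw_step p z)) = (\<Sum>k. of_nat (count z k) * Mm p k j)"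
  unfolding gw_step_def foldr_mean sum_list_count by simp



primrec mu :: "(nat \<Rightarrow> nat multiset pmf) \<Rightarrow> nat \<Rightarrow> nat \<Rightarrow> nat multiset pmf" where
  "mu p i 0 = return_pmf {#i#}"
| "mu p i (Suc n) = bind_pmf (mu p i n) (gw_step p)"

definition Am :: "(nat \<Rightarrow> nat multiset pmf) \<Rightarrow> nat \<Rightarrow> nat \<Rightarrow> nat \<Rightarrow> ennreal" where
  "Am p i n j = (\<integral>\<^sup>+ z. of_nat (count z j) \<partial>measure_pmf (mu p i n))"

lemma Am_Suc: "Am p i (Suc n) j = (\<Sum>k. Am p i n k * Mm p k j)"
proof -
  have "Am p i (Suc n) j = (\<integral>\<^sup>+ y. (\<Sum>k. of_nat (count y k) * Mm p k j) \<partial>measure_pmf (mu p i n))"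
    by (simp add: Am_def step_mean)
  also have "\<dots> = (\<Sum>k. (\<integral>\<^sup>+ y. of_nat (count y k) * Mm p k j \<partial>measure_pmf (mu p i n)))"
    by (rule nn_integral_suminf) simp
  also have "\<dots> = (\<Sum>k. Am p i n k * Mm p k j)"
    by (simp add: Am_def nn_integral_multc)
  finally show ?thesis .
qed

lemma Mm_eq:
  assumes "finite_means p"
  shows "Mm p k j = ennreal (mean_matrix p k j)" "mean_matrix p k j \<ge> 0"
proof -
  have int: "integrable (measure_pmf (p k)) (\<lambda>c. real (count c j))"
    using assms by (simp add: finite_means_def)
  have "Mm p k j = (\<integral>\<^sup>+ c. ennreal (real (count c j)) \<partial>measure_pmf (p k))"
    by (simp add: Mm_def ennreal_of_nat_eq_real_of_nat)
  also have "\<dots> = ennreal (mean_matrix p k j)"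
    unfolding mean_matrix_def by (rule nn_integral_eq_integral[OF int]) simp
  finally show "Mm p k j = ennreal (mean_matrix p k j)" .
  show "mean_matrix p k j \<ge> 0" unfolding mean_matrix_def by simp
qed

lemma Am_bound:
  assumes means: "finite_means p" and lam_le: "lam \<le> 1"
    and xpos: "\<And>i. x i > 0"
    and xM: "\<And>j. summable (\<lambda>i. x i * mean_matrix p i j) \<and>
                 (\<Sum>i. x i * mean_matrix p i j) \<le> lam * x j"
  shows "ennreal (x i) * Am p i n j \<le> ennreal (x j)"
proof (induction n arbitrary: j)
  case 0
  then show ?case by (auto simp: Am_def)
next
  case (Suc n)
  have "ennreal (x i) * Am p i (Suc n) j = (\<Sum>k. (ennreal (x i) * Am p i n k) * Mm p k j)"
    by (simp add: Am_Suc mult.assoc)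
  also have "\<dots> \<le> (\<Sum>k. ennreal (x k) * Mm p k j)"
    by (intro suminf_le mult_right_mono Suc) auto
  also have "\<dots> = (\<Sum>k. ennreal (x k * mean_matrix p k j))"
    using Mm_eq[OF means] xpos by (simp add: ennreal_mult less_imp_le)
  also have "\<dots> = ennreal (\<Sum>k. x k * mean_matrix p k j)"
    by (intro suminf_ennreal2 mult_nonneg_nonneg less_imp_le[OF xpos] Mm_eq(2)[OF means]) (use xM in auto)
  also have "\<dots> \<le> ennreal (x j)"
  proof (rule ennreal_leI)
    have "lam * x j \<le> x j" using lam_le xpos[of j] by (simp add: mult_le_cancel_right1)
    then show "(\<Sum>k. x k * mean_matrix p k j) \<le> x j" using xM[of j] by linarith
  qed
  finally show ?case .
qed

lemma size_bound:
  assumes means: "finite_means p" and lam_le: "lam \<le> 1"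
    and xpos: "\<And>i. x i > 0" and xsum: "summable x"
    and xM: "\<And>j. summable (\<lambda>i. x i * mean_matrix p i j) \<and>
                 (\<Sum>i. x i * mean_matrix p i j) \<le> lam * x j"
  shows "ennreal (x i) * (\<integral>\<^sup>+ z. of_nat (size z) \<partial>measure_pmf (mu p i n)) \<le> ennreal (suminf x)"
proof -
  have "(\<integral>\<^sup>+ z. of_nat (size z) \<partial>measure_pmf (mu p i n)) = (\<Sum>j. Am p i n j)"
    unfolding size_count_sum Am_def by (rule nn_integral_suminf) simp
  then have "ennreal (x i) * (\<integral>\<^sup>+ z. of_nat (size z) \<partial>measure_pmf (mu p i n)) = (\<Sum>j. ennreal (x i) * Am p i n j)"
    by simp
  also have "\<dots> \<le> (\<Sum>j. ennreal (x j))"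
    by (intro suminf_le Am_bound[OF means lam_le xpos xM]) auto
  also have "\<dots> = ennreal (suminf x)"
    using xpos xsum by (intro suminf_ennreal2) (auto intro: less_imp_le)
  finally show ?thesis .
qed



lemma space_gw: assumes "gw_law p i P" shows "space P = UNIV"
proof -
  have "sets P = sets (PiM UNIV (\<lambda>_. count_space UNIV) :: (nat \<Rightarrow> nat multiset) measure)"
    using assms by (simp add: gw_law_def)
  then have "space P = space (PiM UNIV (\<lambda>_. count_space UNIV) :: (nat \<Rightarrow> nat multiset) measure)"
    by (rule sets_eq_imp_space_eq)
  then show ?thesis by (simp add: space_PiM)
qed

lemma comp_meas: assumes "gw_law p i P"
  shows "(\<lambda>\<omega>. \<omega> k) \<in> measurable P (count_space UNIV)"
proof -
  have s: "sets P = sets (PiM UNIV (\<lambda>_. count_space UNIV) :: (nat \<Rightarrow> nat multiset) measure)"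
    using assms by (simp add: gw_law_def)
  show ?thesis
    by (subst measurable_cong_sets[OF s refl]) (rule measurable_component_singleton, simp)
qed

lemma cyl_sets: assumes "gw_law p i P"
  shows "{\<omega>. \<forall>k\<le>m. \<omega> (n+k) = h k} \<in> sets P"
proof -
  note [measurable] = comp_meas[OF assms]
  have "{\<omega>\<in>space P. \<forall>k\<le>m. \<omega> (n+k) = h k} \<in> sets P" by measurable
  then show ?thesis using space_gw[OF assms] by simp
qed

lemma cyl_formula:
  assumes law: "gw_law p i P"
  shows "emeasure P {\<omega>. \<forall>k\<le>m. \<omega> (n+k) = h k}
     = ennreal (pmf (mu p i n) (h 0) * (\<Prod>k<m. pmf (gw_step p (h k)) (h (Suc k))))"
proof (induction n arbitrary: m h)
  case 0
  have "emeasure P {\<omega> \<in> space P. \<forall>k\<le>m. \<omega> k = h k}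
        = ennreal ((if h 0 = {#i#} then 1 else 0) * (\<Prod>k<m. pmf (gw_step p (h k)) (h (Suc k))))"
    using law by (simp add: gw_law_def)
  then show ?case using space_gw[OF law] by (simp add: pmf_return)
next
  case (Suc n)
  define h' where "h' y k = (case k of 0 \<Rightarrow> y | Suc k' \<Rightarrow> h k')" for y k
  define X where "X y = {\<omega>. \<forall>k\<le>Suc m. \<omega> (n+k) = h' y k}" for y
  have eq: "{\<omega>. \<forall>k\<le>m. \<omega> (Suc n + k) = h k} = (\<Union>y\<in>UNIV. X y)"
  proof (intro set_eqI iffI)
    fix \<omega> assume a: "\<omega> \<in> {\<omega>. \<forall>k\<le>m. \<omega> (Suc n + k) = h k}"
    have "\<omega> \<in> X (\<omega> n)" unfolding X_def
    proof (intro CollectI allI impI)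
      fix k assume "k \<le> Suc m"
      then show "\<omega> (n + k) = h' (\<omega> n) k"
        using a by (cases k) (auto simp: h'_def)
    qed
    then show "\<omega> \<in> (\<Union>y\<in>UNIV. X y)" by blast
  next
    fix \<omega> assume "\<omega> \<in> (\<Union>y\<in>UNIV. X y)"
    then obtain y where "\<omega> \<in> X y" by blast
    then have "\<forall>k\<le>Suc m. \<omega> (n+k) = h' y k" by (simp add: X_def)
    then show "\<omega> \<in> {\<omega>. \<forall>k\<le>m. \<omega> (Suc n + k) = h k}"
      by (auto simp: h'_def)
  qed
  have disj: "disjoint_family_on X UNIV"
    unfolding disjoint_family_on_def X_def
    by (auto simp: h'_def) (metis le0 add_0_right nat.case(1))
  have "emeasure P {\<omega>. \<forall>k\<le>m. \<omega> (Suc n + k) = h k} = (\<integral>\<^sup>+ y. emeasure P (X y) \<partial>count_space UNIV)"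
    unfolding eq by (rule emeasure_UN_countable) (auto simp: X_def intro: cyl_sets[OF law] disj)
  also have "\<dots> = (\<integral>\<^sup>+ y. ennreal (pmf (mu p i n) y) * ennreal (pmf (gw_step p y) (h 0))
          * ennreal (\<Prod>k<m. pmf (gw_step p (h k)) (h (Suc k))) \<partial>count_space UNIV)"
  proof (rule nn_integral_cong)
    fix y
    have "(\<Prod>k<Suc m. pmf (gw_step p (h' y k)) (h' y (Suc k)))
          = pmf (gw_step p y) (h 0) * (\<Prod>k<m. pmf (gw_step p (h k)) (h (Suc k)))"
      by (subst prod.lessThan_Suc_shift) (simp add: h'_def)
    then show "emeasure P (X y) = ennreal (pmf (mu p i n) y) * ennreal (pmf (gw_step p y) (h 0))
          * ennreal (\<Prod>k<m. pmf (gw_step p (h k)) (h (Suc k)))"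
      unfolding X_def Suc.IH by (simp add: h'_def ennreal_mult' prod_nonneg mult.assoc)
  qed
  also have "\<dots> = (\<integral>\<^sup>+ y. ennreal (pmf (gw_step p y) (h 0)) \<partial>measure_pmf (mu p i n))
          * ennreal (\<Prod>k<m. pmf (gw_step p (h k)) (h (Suc k)))"
    by (subst nn_integral_multc) (auto simp: nn_integral_measure_pmf)
  also have "\<dots> = ennreal (pmf (mu p i (Suc n)) (h 0) * (\<Prod>k<m. pmf (gw_step p (h k)) (h (Suc k))))"
    by (simp add: ennreal_pmf_bind ennreal_mult' prod_nonneg)
  finally show ?case .
qed



lemma marginal:
  assumes law: "gw_law p i P"
  shows "emeasure P {\<omega>. \<omega> n \<in> S} = emeasure (measure_pmf (mu p i n)) S"
proof -
  define X where "X (z::nat multiset) = {\<omega>::nat \<Rightarrow> nat multiset. \<forall>k\<le>0. \<omega> (n+k) = (\<lambda>_. z) k}" for z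
  have eq: "{\<omega>. \<omega> n \<in> S} = (\<Union>z\<in>S. X z)" by (auto simp: X_def)
  have Xs: "\<And>z. X z \<in> sets P" unfolding X_def by (rule cyl_sets[OF law])
  have "emeasure P {\<omega>. \<omega> n \<in> S} = (\<integral>\<^sup>+ z. emeasure P (X z) \<partial>count_space S)"
    unfolding eq by (rule emeasure_UN_countable[OF Xs])
      (auto simp: X_def disjoint_family_on_def)
  also have "\<dots> = (\<integral>\<^sup>+ z. ennreal (pmf (mu p i n) z) * indicator S z \<partial>count_space UNIV)"
    unfolding X_def cyl_formula[OF law]
    by (subst nn_integral_restrict_space[symmetric]) (auto simp: restrict_count_space intro!: nn_integral_cong)
  also have "\<dots> = emeasure (measure_pmf (mu p i n)) S"
    by (simp add: nn_integral_measure_pmf[symmetric])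
  finally show ?thesis .
qed

lemma tail_bound:
  assumes law: "gw_law p i P"
    and means: "finite_means p" and lam_le: "lam \<le> 1"
    and xpos: "\<And>i. x i > 0" and xsum: "summable x"
    and xM: "\<And>j. summable (\<lambda>i. x i * mean_matrix p i j) \<and>
                 (\<Sum>i. x i * mean_matrix p i j) \<le> lam * x j"
  shows "ennreal (x i) * (of_nat K * emeasure P {\<omega>. K \<le> size (\<omega> N)}) \<le> ennreal (suminf x)"
proof -
  have "of_nat K * emeasure P {\<omega>. K \<le> size (\<omega> N)}
      = (\<integral>\<^sup>+ z. of_nat K * indicator {z. K \<le> size z} z \<partial>measure_pmf (mu p i N))"
    using marginal[OF law, of N "{z. K \<le> size z}"] by (simp add: nn_integral_cmult_indicator)
  also have "\<dots> \<le> (\<integral>\<^sup>+ z. of_nat (size z) \<partial>measure_pmf (mu p i N))"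
    by (intro nn_integral_mono) (auto simp: indicator_def)
  finally have "ennreal (x i) * (of_nat K * emeasure P {\<omega>. K \<le> size (\<omega> N)})
      \<le> ennreal (x i) * (\<integral>\<^sup>+ z. of_nat (size z) \<partial>measure_pmf (mu p i N))"
    by (rule mult_left_mono) simp
  also have "\<dots> \<le> ennreal (suminf x)"
    by (rule size_bound[OF means lam_le xpos xsum xM])
  finally show ?thesis .
qed



theorem mainTheorem8:
  fixes p :: "nat \<Rightarrow> nat multiset pmf"
    and P :: "nat \<Rightarrow> (nat \<Rightarrow> nat multiset) measure"
    and x :: "nat \<Rightarrow> real" and lam :: real
  assumes law: "\<And>i. gw_law p i (P i)"
    and means: "finite_means p"
    and irred: "irreducible_matrix (mean_matrix p)"
    and dich: "dichotomy P"
    and lam_le: "lam \<le> 1"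
    and xpos: "\<And>i. x i > 0"
    and xsum: "summable x"
    and xM: "\<And>j. summable (\<lambda>i. x i * mean_matrix p i j) \<and>
                 (\<Sum>i. x i * mean_matrix p i j) \<le> lam * x j"
  shows "\<forall>i. measure (P i) extinct_event = 1"
proof
  fix i
  interpret prob_space "P i" using law[of i] by (simp add: gw_law_def)
  have sp: "space (P i) = UNIV" by (rule space_gw[OF law])
  note [measurable] = comp_meas[OF law[of i]]
  define E where "E K N = {\<omega>::nat \<Rightarrow> nat multiset. \<forall>n\<ge>N. K \<le> size (\<omega> n)}" for K N
  define B where "B K = (\<Union>N. E K N)" for K
  define Nul where "Nul = (\<Inter>K. B K)"
  have Es: "E K N \<in> sets (P i)" for K N
  proof -
    have "{\<omega>\<in>space (P i). \<forall>n\<ge>N. K \<le> size (\<omega> n)} \<in> sets (P i)" by measurable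
    then show ?thesis by (simp add: sp E_def)
  qed
  have Bs: "B K \<in> sets (P i)" for K unfolding B_def using Es by auto
  have Ns: "Nul \<in> sets (P i)" unfolding Nul_def using Bs by auto
  have bnd: "ennreal (x i) * (of_nat K * emeasure (P i) Nul) \<le> ennreal (suminf x)" for K
  proof -
    have "emeasure (P i) (B K) = (SUP N. emeasure (P i) (E K N))"
      unfolding B_def
      proof (rule SUP_emeasure_incseq[symmetric])
        show "range (E K) \<subseteq> events" using Es by blast
        show "incseq (E K)" by (auto simp: incseq_def E_def)
      qed
    then have "ennreal (x i) * (of_nat K * emeasure (P i) (B K))
          = (SUP N. ennreal (x i) * (of_nat K * emeasure (P i) (E K N)))"
      by (simp add: SUP_mult_left_ennreal image_image)
    also have "\<dots> \<le> ennreal (suminf x)"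
    proof (rule SUP_least)
      fix N
      have "emeasure (P i) (E K N) \<le> emeasure (P i) {\<omega>. K \<le> size (\<omega> N)}"
      proof (rule emeasure_mono)
        have "{\<omega>\<in>space (P i). K \<le> size (\<omega> N)} \<in> sets (P i)" by measurable
        then show "{\<omega>. K \<le> size (\<omega> N)} \<in> events" by (simp add: sp)
      qed (auto simp: E_def)
      then have "ennreal (x i) * (of_nat K * emeasure (P i) (E K N))
           \<le> ennreal (x i) * (of_nat K * emeasure (P i) {\<omega>. K \<le> size (\<omega> N)})"
        by (intro mult_left_mono) auto
      also have "\<dots> \<le> ennreal (suminf x)"
        by (rule tail_bound[OF law means lam_le xpos xsum xM])
      finally show "ennreal (x i) * (of_nat K * emeasure (P i) (E K N)) \<le> ennreal (suminf x)" .
    qed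
    finally have *: "ennreal (x i) * (of_nat K * emeasure (P i) (B K)) \<le> ennreal (suminf x)" .
    have "emeasure (P i) Nul \<le> emeasure (P i) (B K)"
      by (rule emeasure_mono) (auto simp: Nul_def Bs)
    then have "ennreal (x i) * (of_nat K * emeasure (P i) Nul) \<le> ennreal (x i) * (of_nat K * emeasure (P i) (B K))"
      by (intro mult_left_mono) auto
    with * show ?thesis by order
  qed
  define r where "r = measure (P i) Nul"
  have r0: "r \<ge> 0" by (simp add: r_def)
  have em: "emeasure (P i) Nul = ennreal r" unfolding r_def by (simp add: emeasure_eq_measure)
  have rb: "x i * (real K * r) \<le> suminf x" for K
  proof -
    have "ennreal (x i * (real K * r)) \<le> ennreal (suminf x)"
      using bnd[of K] xpos[of i] r0 by (simp add: em ennreal_mult' ennreal_of_nat_eq_real_of_nat)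
    moreover have "suminf x \<ge> 0" using xpos xsum by (intro suminf_nonneg) (auto intro: less_imp_le)
    ultimately show ?thesis by (simp add: ennreal_le_iff)
  qed
  have "r = 0"
  proof (rule ccontr)
    assume "r \<noteq> 0"
    then have rp: "r > 0" using r0 by simp
    obtain K :: nat where K: "suminf x / (x i * r) < real K" using reals_Archimedean2 by blast
    have "suminf x < real K * (x i * r)" using K xpos[of i] rp by (simp add: divide_less_eq)
    with rb[of K] show False by (simp add: algebra_simps)
  qed
  then have "Nul \<in> null_sets (P i)" using Ns em by (simp add: null_sets_def)
  then have ae1: "AE \<omega> in P i. \<omega> \<notin> Nul" by (rule AE_not_in)
  have ae2: "AE \<omega> in P i. (\<exists>n. \<omega> n = {#}) \<or> filterlim (\<lambda>n. size (\<omega> n)) at_top sequentially"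
    using dich by (simp add: dichotomy_def)
  have "AE \<omega> in P i. \<exists>n. \<omega> n = {#}"
    using ae1 ae2
  proof eventually_elim
    case (elim \<omega>)
    show ?case
    proof (rule ccontr)
      assume "\<not> (\<exists>n. \<omega> n = {#})"
      with elim have tl: "filterlim (\<lambda>n. size (\<omega> n)) at_top sequentially" by blast
      have "\<omega> \<in> B K" for K
      proof -
        have "eventually (\<lambda>n. K \<le> size (\<omega> n)) sequentially"
          using tl by (simp add: filterlim_at_top)
        then obtain N where "\<forall>n\<ge>N. K \<le> size (\<omega> n)" by (auto simp: eventually_sequentially)
        then show ?thesis by (auto simp: B_def E_def)
      qed
      then have "\<omega> \<in> Nul" by (simp add: Nul_def)
      with elim show False by blast
    qed
  qed
  moreover have "{\<omega>\<in>space (P i). \<exists>n. \<omega> n = {#}} \<in> sets (P i)" by measurable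
  ultimately have "prob {\<omega>\<in>space (P i). \<exists>n. \<omega> n = {#}} = 1"
    by (subst prob_Collect_eq_1) auto
  then show "measure (P i) extinct_event = 1" by (simp add: sp extinct_event_def)
qed

end
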